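(* The Banach space $c$ of convergent real sequences (with the sup norm) can be U-embedded into $C[0,1]$.
   Context: $C[0,1]$ carries the sup norm. A linear isometry $T\colon X\to Y$ is a U-embedding if every $x^*\in X^*$ has a unique $y^*\in Y^*$ with $T^*(y^* )=x^*$ and $\|y^*\|=\|x^*\|$; "$X$ can be U-embedded into $Y$" means such a $T$ exists. *)

theory Defs
  imports "HOL-Analysis.Analysis"
begin

definition c_space :: "(nat \<Rightarrow> real) set" where
  "c_space = {x. convergent x}"

definition c_norm :: "(nat \<Rightarrow> real) \<Rightarrow> real" where
  "c_norm x = (SUP n. \<bar>x n\<bar>)"

text \<open>C[0,1]: continuous functions on [0,1], normalised to be 0 outside [0,1]
so that each element of C[0,1] has exactly one representative.\<close>
definition C01 :: "(real \<Rightarrow> real) set" where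
  "C01 = {f. continuous_on {0..1} f \<and> (\<forall>t. t \<notin> {0..1} \<longrightarrow> f t = 0)}"

definition C01_norm :: "(real \<Rightarrow> real) \<Rightarrow> real" where
  "C01_norm f = (SUP t\<in>{0..1}. \<bar>f t\<bar>)"

definition lin_on :: "('a \<Rightarrow> real) set \<Rightarrow> (('a \<Rightarrow> real) \<Rightarrow> 'b) \<Rightarrow> ('b \<Rightarrow> 'b \<Rightarrow> 'b) \<Rightarrow> (real \<Rightarrow> 'b \<Rightarrow> 'b) \<Rightarrow> bool" where
  "lin_on V F add sc \<longleftrightarrow>
     (\<forall>x\<in>V. \<forall>y\<in>V. F (\<lambda>i. x i + y i) = add (F x) (F y)) \<and>
     (\<forall>a. \<forall>x\<in>V. F (\<lambda>i. a * x i) = sc a (F x))"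

text \<open>Continuous (bounded) linear functionals on the normed space (V, N);
they are compared only on V.\<close>
definition is_dual :: "('a \<Rightarrow> real) set \<Rightarrow> (('a \<Rightarrow> real) \<Rightarrow> real) \<Rightarrow> (('a \<Rightarrow> real) \<Rightarrow> real) \<Rightarrow> bool" where
  "is_dual V N \<phi> \<longleftrightarrow> lin_on V \<phi> (+) (*) \<and> (\<exists>K. \<forall>x\<in>V. \<bar>\<phi> x\<bar> \<le> K * N x)"

definition dual_norm :: "('a \<Rightarrow> real) set \<Rightarrow> (('a \<Rightarrow> real) \<Rightarrow> real) \<Rightarrow> (('a \<Rightarrow> real) \<Rightarrow> real) \<Rightarrow> real" where
  "dual_norm V N \<phi> = (SUP x\<in>{x\<in>V. N x \<le> 1}. \<bar>\<phi> x\<bar>)"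

definition U_embedding ::
  "('a \<Rightarrow> real) set \<Rightarrow> (('a \<Rightarrow> real) \<Rightarrow> real) \<Rightarrow> ('b \<Rightarrow> real) set \<Rightarrow> (('b \<Rightarrow> real) \<Rightarrow> real)
    \<Rightarrow> (('a \<Rightarrow> real) \<Rightarrow> ('b \<Rightarrow> real)) \<Rightarrow> bool" where
  "U_embedding X NX Y NY T \<longleftrightarrow>
     (\<forall>x\<in>X. T x \<in> Y) \<and>
     lin_on X T (\<lambda>f g i. f i + g i) (\<lambda>a f i. a * f i) \<and>
     (\<forall>x\<in>X. NY (T x) = NX x) \<and>
     (\<forall>\<phi>. is_dual X NX \<phi> \<longrightarrow>
        (\<exists>\<psi>. (is_dual Y NY \<psi> \<and> (\<forall>x\<in>X. \<psi> (T x) = \<phi> x) \<and> dual_norm Y NY \<psi> = dual_norm X NX \<phi>) \<and>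
            (\<forall>\<psi>'. is_dual Y NY \<psi>' \<and> (\<forall>x\<in>X. \<psi>' (T x) = \<phi> x) \<and> dual_norm Y NY \<psi>' = dual_norm X NX \<phi>
                 \<longrightarrow> (\<forall>y\<in>Y. \<psi>' y = \<psi> y))))"

definition U_embeddable ::
  "('a \<Rightarrow> real) set \<Rightarrow> (('a \<Rightarrow> real) \<Rightarrow> real) \<Rightarrow> ('b \<Rightarrow> real) set \<Rightarrow> (('b \<Rightarrow> real) \<Rightarrow> real) \<Rightarrow> bool" where
  "U_embeddable X NX Y NY \<longleftrightarrow> (\<exists>T. U_embedding X NX Y NY T)"

end

theory Submission
  imports Defs "HOL-Analysis.Analysis"
begin


definition pp :: "nat \<Rightarrow> real" where "pp n = 1 / (real n + 1)"
definition ww :: "nat \<Rightarrow> real" where "ww n = 1 / (2 * (real n + 1) * (real n + 2))"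
definition hh :: "nat \<Rightarrow> real \<Rightarrow> real" where "hh n t = max 0 (1 - \<bar>t - pp n\<bar> / ww n)"
definition ZZ :: "real set" where "ZZ = insert 0 (range pp)"
definition dd :: "real \<Rightarrow> real" where "dd t = infdist t ZZ"
definition FF :: "(nat \<Rightarrow> real) \<Rightarrow> real \<Rightarrow> real" where
  "FF x t = lim x + (\<Sum>n\<in>{n. hh n t \<noteq> 0}. (x n - lim x) * hh n t)"
definition TT :: "(nat \<Rightarrow> real) \<Rightarrow> real \<Rightarrow> real" where
  "TT x t = (if t \<in> {0..1} then (1 - dd t) * FF x t else 0)"
definition RR :: "(real \<Rightarrow> real) \<Rightarrow> nat \<Rightarrow> real" where "RR f n = f (pp n)"

lemma ww_pos: "ww n > 0" by (simp add: ww_def)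
lemma pp_pos: "pp n > 0" by (simp add: pp_def)
lemma pp_le1: "pp n \<le> 1" by (simp add: pp_def)
lemma pp_in: "pp n \<in> {0..1}" using pp_pos pp_le1 by (simp add: less_imp_le)

lemma hh_nonneg: "0 \<le> hh n t" by (simp add: hh_def)
lemma hh_le1: "hh n t \<le> 1" using ww_pos[of n] by (simp add: hh_def)
lemma hh_nz_iff: "hh n t \<noteq> 0 \<longleftrightarrow> \<bar>t - pp n\<bar> < ww n"
  using ww_pos[of n] by (auto simp: hh_def max_def field_simps)
lemma hh_pp: "hh n (pp n) = 1" by (simp add: hh_def)

lemma gap: assumes "n < m" shows "pp n - pp m \<ge> ww n + ww m"
proof -
  have "pp m \<le> pp (Suc n)" using assms by (simp add: pp_def frac_le)
  moreover have "ww m \<le> ww n" using assms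
    by (simp add: ww_def frac_le mult_mono)
  moreover have "pp n - pp (Suc n) = 2 * ww n"
    unfolding pp_def ww_def by (simp add: divide_simps) (simp add: algebra_simps)
  ultimately show ?thesis by linarith
qed

lemma hh_disj: assumes "hh n t \<noteq> 0" "hh m t \<noteq> 0" shows "n = m"
proof (rule ccontr)
  assume "n \<noteq> m"
  then consider "n < m" | "m < n" by linarith
  then show False
  proof cases
    case 1 from gap[OF 1] assms show False by (auto simp: hh_nz_iff)
  next
    case 2 from gap[OF 2] assms show False by (auto simp: hh_nz_iff)
  qed
qed

lemma supp_cases: "{n. hh n t \<noteq> 0} = {} \<or> (\<exists>m. {n. hh n t \<noteq> 0} = {m})"
  using hh_disj by blast

lemma FF_single: assumes "hh m t \<noteq> 0" shows "FF x t = lim x + (x m - lim x) * hh m t"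
proof -
  have "{n. hh n t \<noteq> 0} = {m}" using assms hh_disj by blast
  then show ?thesis by (simp add: FF_def)
qed

lemma FF_zero: assumes "\<forall>n. hh n t = 0" shows "FF x t = lim x"
  using assms by (simp add: FF_def)

lemma FF_pp: "FF x (pp m) = x m"
  using FF_single[of m "pp m" x] by (simp add: hh_pp)

lemma hh_0: "hh n 0 = 0"
proof -
  have "ww n < pp n" unfolding ww_def pp_def by (simp add: divide_simps) (simp add: algebra_simps add_pos_nonneg)
  then show ?thesis using pp_pos[of n] hh_nz_iff[of n 0] by auto
qed

lemma FF_0: "FF x 0 = lim x" by (simp add: FF_zero hh_0)

lemma c_bdd: fixes x :: "nat \<Rightarrow> real" assumes "convergent x" shows "bdd_above (range (\<lambda>n. \<bar>x n\<bar>))"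
proof -
  from convergent_imp_Bseq[OF assms] obtain K where "\<forall>n. norm (x n) \<le> K"
    unfolding Bseq_def by auto
  then show ?thesis by (auto intro: bdd_aboveI2)
qed

lemma c_le: "convergent x \<Longrightarrow> \<bar>x n\<bar> \<le> c_norm x"
  unfolding c_norm_def by (rule cSUP_upper[OF _ c_bdd]) auto

lemma c_nonneg: "convergent x \<Longrightarrow> 0 \<le> c_norm x"
  using c_le[of x 0] by linarith

lemma c_lim_le: assumes "convergent x" shows "\<bar>lim x\<bar> \<le> c_norm x"
proof -
  have "x \<longlonglongrightarrow> lim x" using assms convergent_LIMSEQ_iff by blast
  then have "(\<lambda>n. \<bar>x n\<bar>) \<longlonglongrightarrow> \<bar>lim x\<bar>" by (rule tendsto_rabs)
  then show ?thesis by (rule LIMSEQ_le_const2) (use c_le[OF assms] in auto)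
qed

lemma c_norm_le: "(\<And>n. \<bar>x n\<bar> \<le> B) \<Longrightarrow> c_norm x \<le> B"
  unfolding c_norm_def by (rule cSUP_least) auto

lemma C01_bdd: assumes "f \<in> C01" shows "bdd_above ((\<lambda>t. \<bar>f t\<bar>) ` {0..1})"
proof -
  have "continuous_on {0..1} f" using assms by (simp add: C01_def)
  then have "bounded (f ` {0..1})"
    by (intro compact_imp_bounded compact_continuous_image) auto
  then obtain B where "\<forall>y\<in>f ` {0..1}. norm y \<le> B" by (auto simp: bounded_iff)
  then show ?thesis by (auto intro!: bdd_aboveI2)
qed

lemma C01_le: assumes "f \<in> C01" shows "\<bar>f t\<bar> \<le> C01_norm f"
proof -
  have le: "\<bar>f s\<bar> \<le> C01_norm f" if "s \<in> {0..1}" for s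
    unfolding C01_norm_def by (rule cSUP_upper[OF that C01_bdd[OF assms]])
  show ?thesis
  proof (cases "t \<in> {0..1}")
    case True then show ?thesis by (rule le)
  next
    case False
    then have "f t = 0" using assms by (simp add: C01_def)
    then show ?thesis using le[of 0] by simp
  qed
qed

lemma C01_norm_le: "(\<And>t. t \<in> {0..1} \<Longrightarrow> \<bar>f t\<bar> \<le> B) \<Longrightarrow> C01_norm f \<le> B"
  unfolding C01_norm_def by (rule cSUP_least) auto

lemma FF_bound: assumes "convergent x" shows "\<bar>FF x t\<bar> \<le> c_norm x"
proof (cases "\<forall>n. hh n t = 0")
  case True then show ?thesis using FF_zero c_lim_le[OF assms] by simp
next
  case False
  then obtain m where m: "hh m t \<noteq> 0" by auto
  let ?h = "hh m t" and ?L = "lim x"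
  have "FF x t = (1 - ?h) * ?L + ?h * x m" using FF_single[OF m] by (simp add: algebra_simps)
  also have "\<bar>\<dots>\<bar> \<le> (1 - ?h) * \<bar>?L\<bar> + ?h * \<bar>x m\<bar>"
    using hh_nonneg[of m t] hh_le1[of m t] by (simp add: abs_mult abs_triangle_ineq[THEN order_trans])
  also have "\<dots> \<le> (1 - ?h) * c_norm x + ?h * c_norm x"
    using hh_nonneg[of m t] hh_le1[of m t] c_lim_le[OF assms] c_le[OF assms, of m]
    by (intro add_mono mult_left_mono) auto
  finally show ?thesis by (simp add: algebra_simps)
qed

lemma hh_cont: "continuous_on UNIV (hh n)"
  unfolding hh_def by (intro continuous_intros) (simp add: ww_def)

lemma FF_cont: assumes "convergent x" shows "continuous_on UNIV (FF x)"
proof (rule uniform_limit_theorem[where F=sequentially])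
  let ?L = "lim x"
  let ?G = "\<lambda>N t. ?L + (\<Sum>n<N. (x n - ?L) * hh n t)"
  show "\<forall>\<^sub>F N in sequentially. continuous_on UNIV (?G N)"
    using hh_cont by (intro always_eventually allI continuous_intros) (auto simp: continuous_on_eq_continuous_at)
  show "uniform_limit UNIV ?G (FF x) sequentially"
    unfolding uniform_limit_sequentially_iff
  proof (intro allI impI)
    fix e :: real assume e: "e > 0"
    have "x \<longlonglongrightarrow> ?L" using assms convergent_LIMSEQ_iff by blast
    then obtain N where N: "\<forall>n\<ge>N. \<bar>x n - ?L\<bar> < e"
      using e unfolding LIMSEQ_def dist_real_def by blast
    have "\<forall>k\<ge>N. \<forall>t\<in>UNIV. dist (?G k t) (FF x t) < e"
    proof (intro allI impI ballI)
      fix k t assume k: "N \<le> k"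
      show "dist (?G k t) (FF x t) < e"
      proof (cases "\<forall>n. hh n t = 0")
        case True then show ?thesis using FF_zero e by (simp add: dist_real_def)
      next
        case False
        then obtain m where m: "hh m t \<noteq> 0" by auto
        have "(\<Sum>n<k. (x n - ?L) * hh n t) = (\<Sum>n<k. if n = m then (x m - ?L) * hh m t else 0)"
          by (rule sum.cong) (use hh_disj m in auto)
        also have "\<dots> = (if m < k then (x m - ?L) * hh m t else 0)" by simp
        finally have S: "(\<Sum>n<k. (x n - ?L) * hh n t) = (if m < k then (x m - ?L) * hh m t else 0)" .
        show ?thesis
        proof (cases "m < k")
          case True then show ?thesis using S FF_single[OF m] e by (simp add: dist_real_def)
        next
          case False
          then have "\<bar>x m - ?L\<bar> < e" using N k by auto
          moreover have "\<bar>(x m - ?L) * hh m t\<bar> \<le> \<bar>x m - ?L\<bar>"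
            using hh_nonneg[of m t] hh_le1[of m t] by (simp add: abs_mult mult_left_le)
          ultimately show ?thesis using S FF_single[OF m] False by (simp add: dist_real_def)
        qed
      qed
    qed
    then show "\<exists>N. \<forall>n\<ge>N. \<forall>s\<in>UNIV. dist (?G n s) (FF x s) < e" by blast
  qed
qed simp

lemma dd_cont: "continuous_on UNIV dd"
  unfolding dd_def by (intro continuous_intros)
lemma dd_nonneg: "0 \<le> dd t" by (simp add: dd_def infdist_nonneg)
lemma dd_le: "dd t \<le> \<bar>t\<bar>"
  unfolding dd_def ZZ_def using infdist_le[of 0 "insert 0 (range pp)" t] by (simp add: dist_real_def)
lemma dd_pp: "dd (pp n) = 0" by (simp add: dd_def ZZ_def)
lemma dd_0: "dd 0 = 0" by (simp add: dd_def ZZ_def)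

lemma TT_C01: assumes "convergent x" shows "TT x \<in> C01"
proof -
  have "continuous_on UNIV (\<lambda>t. (1 - dd t) * FF x t)"
    using dd_cont FF_cont[OF assms] by (intro continuous_intros) auto
  then have "continuous_on {0..1} (\<lambda>t. (1 - dd t) * FF x t)"
    by (rule continuous_on_subset) auto
  then have "continuous_on {0..1} (TT x)"
    by (rule continuous_on_cong[THEN iffD1, rotated 2]) (auto simp: TT_def)
  then show ?thesis by (simp add: C01_def TT_def)
qed

lemma TT_pp: "TT x (pp n) = x n"
  using pp_in[of n] by (simp add: TT_def dd_pp FF_pp)
lemma TT_0: "TT x 0 = lim x"
  by (simp add: TT_def dd_0 FF_0)

lemma TT_bound1: assumes "convergent x" "t \<in> {0..1}"
  shows "\<bar>TT x t\<bar> \<le> (1 - dd t) * c_norm x"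
proof -
  have "0 \<le> 1 - dd t" using dd_le[of t] assms(2) by auto
  then show ?thesis using assms FF_bound[OF assms(1), of t]
    by (simp add: TT_def abs_mult mult_left_mono)
qed

lemma TT_bound: assumes "convergent x" shows "\<bar>TT x t\<bar> \<le> c_norm x"
proof (cases "t \<in> {0..1}")
  case True
  then have "\<bar>TT x t\<bar> \<le> (1 - dd t) * c_norm x" using TT_bound1 assms by blast
  also have "\<dots> \<le> c_norm x" using dd_nonneg[of t] c_nonneg[OF assms]
    by (simp add: algebra_simps)
  finally show ?thesis .
next
  case False then have "TT x t = 0" unfolding TT_def by auto
  then show ?thesis by (simp add: c_nonneg[OF assms])
qed

lemma TT_norm: assumes "convergent x" shows "C01_norm (TT x) = c_norm x"
proof (rule antisym)
  show "C01_norm (TT x) \<le> c_norm x" by (rule C01_norm_le) (rule TT_bound[OF assms])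
  show "c_norm x \<le> C01_norm (TT x)"
    by (rule c_norm_le) (metis TT_pp C01_le TT_C01 assms)
qed

lemma lim_add: fixes x y :: "nat \<Rightarrow> real" assumes "convergent x" "convergent y"
  shows "lim (\<lambda>i. x i + y i) = lim x + lim y"
  using assms by (intro limI tendsto_add) (auto simp: convergent_LIMSEQ_iff)
lemma lim_scale: fixes x :: "nat \<Rightarrow> real" assumes "convergent x"
  shows "lim (\<lambda>i. a * x i) = a * lim x"
  using assms by (intro limI tendsto_mult tendsto_const) (auto simp: convergent_LIMSEQ_iff)

lemma FF_add: assumes "convergent x" "convergent y"
  shows "FF (\<lambda>i. x i + y i) t = FF x t + FF y t"
  unfolding FF_def lim_add[OF assms]
  by (simp add: sum.distrib[symmetric] algebra_simps)

lemma FF_scale: assumes "convergent x"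
  shows "FF (\<lambda>i. a * x i) t = a * FF x t"
  unfolding FF_def lim_scale[OF assms]
  by (simp add: sum_distrib_left algebra_simps)

lemma TT_add: assumes "convergent x" "convergent y"
  shows "TT (\<lambda>i. x i + y i) = (\<lambda>t. TT x t + TT y t)"
  by (rule ext) (simp add: TT_def FF_add[OF assms] algebra_simps)

lemma TT_scale: assumes "convergent x"
  shows "TT (\<lambda>i. a * x i) = (\<lambda>t. a * TT x t)"
  by (rule ext) (simp add: TT_def FF_scale[OF assms] algebra_simps)

lemma RR_conv: assumes "f \<in> C01" shows "RR f \<longlonglongrightarrow> f 0"
proof -
  have c: "continuous_on {0..1} f" using assms by (simp add: C01_def)
  have "pp \<longlonglongrightarrow> 0" unfolding pp_def using LIMSEQ_inverse_real_of_nat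
    by (simp add: inverse_eq_divide add.commute)
  from continuous_on_tendsto_compose[OF c this] pp_in
  show ?thesis unfolding RR_def by (simp add: o_def)
qed

lemma RR_c: "f \<in> C01 \<Longrightarrow> convergent (RR f)"
  using RR_conv convergentI by blast
lemma RR_lim: "f \<in> C01 \<Longrightarrow> lim (RR f) = f 0"
  using RR_conv limI by blast
lemma RR_norm: "f \<in> C01 \<Longrightarrow> c_norm (RR f) \<le> C01_norm f"
  by (rule c_norm_le) (simp add: RR_def C01_le)
lemma RR_TT: "RR (TT x) = x"
  by (rule ext) (simp add: RR_def TT_pp)



lemma lin_add: "is_dual V N \<phi> \<Longrightarrow> x \<in> V \<Longrightarrow> y \<in> V \<Longrightarrow> \<phi> (\<lambda>i. x i + y i) = \<phi> x + \<phi> y"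
  by (simp add: is_dual_def lin_on_def)
lemma lin_scale: "is_dual V N \<phi> \<Longrightarrow> x \<in> V \<Longrightarrow> \<phi> (\<lambda>i. a * x i) = a * \<phi> x"
  by (simp add: is_dual_def lin_on_def)

lemma dual_bdd:
  assumes "is_dual V N \<phi>" "\<forall>z\<in>V. 0 \<le> N z"
  shows "bdd_above ((\<lambda>z. \<bar>\<phi> z\<bar>) ` {z\<in>V. N z \<le> 1})"
proof -
  obtain K where K: "\<forall>x\<in>V. \<bar>\<phi> x\<bar> \<le> K * N x" using assms(1) by (auto simp: is_dual_def)
  have "\<bar>\<phi> z\<bar> \<le> \<bar>K\<bar>" if "z \<in> V" "N z \<le> 1" for z
  proof -
    have "\<bar>\<phi> z\<bar> \<le> K * N z" using K that by blast
    also have "\<dots> \<le> \<bar>K\<bar> * N z" using assms(2) that by (intro mult_right_mono) auto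
    also have "\<dots> \<le> \<bar>K\<bar>" using assms(2) that by (simp add: mult_left_le)
    finally show ?thesis .
  qed
  then show ?thesis by (auto intro!: bdd_aboveI2)
qed

lemma dual_le1:
  assumes "is_dual V N \<phi>" "y \<in> V" "N y \<le> 1" "\<forall>z\<in>V. 0 \<le> N z"
  shows "\<bar>\<phi> y\<bar> \<le> dual_norm V N \<phi>"
  unfolding dual_norm_def by (rule cSUP_upper[OF _ dual_bdd[OF assms(1,4)]]) (use assms in auto)

lemma dual_le:
  assumes d: "is_dual V N \<phi>" and y: "y \<in> V"
    and P1: "\<forall>z\<in>V. \<forall>i. \<bar>z i\<bar> \<le> N z"
    and P2: "\<forall>z B. (\<forall>i. \<bar>z i\<bar> \<le> B) \<longrightarrow> N z \<le> B"
    and P3: "\<forall>z\<in>V. \<forall>a. (\<lambda>i. a * z i) \<in> V"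
  shows "\<bar>\<phi> y\<bar> \<le> dual_norm V N \<phi> * N y"
proof -
  have nn: "\<forall>z\<in>V. 0 \<le> N z" by (meson P1 abs_ge_zero order_trans)
  show ?thesis
  proof (cases "N y = 0")
    case True
    have "y i = 0" for i using P1 y True by (metis abs_le_zero_iff)
    then have "y = (\<lambda>i. 0 * y i)" by auto
    then have "\<phi> y = 0 * \<phi> y" using lin_scale[OF d y, of 0] by metis
    then show ?thesis using True by simp
  next
    case False
    then have pos: "N y > 0" using nn y by force
    let ?y = "\<lambda>i. (1 / N y) * y i"
    have yV: "?y \<in> V" using P3 y by blast
    have "\<forall>i. \<bar>?y i\<bar> \<le> 1" using P1 y pos by (simp add: abs_mult divide_simps)
    then have "N ?y \<le> 1" by (rule mp[OF spec[OF spec[OF P2]]])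
    then have "\<bar>\<phi> ?y\<bar> \<le> dual_norm V N \<phi>" using dual_le1[OF d yV _ nn] by blast
    moreover have "\<phi> ?y = (1 / N y) * \<phi> y" by (rule lin_scale[OF d y])
    then have "\<phi> y = \<phi> ?y * N y" using pos by simp
    then have "\<bar>\<phi> y\<bar> = \<bar>\<phi> ?y\<bar> * N y" using pos by (simp add: abs_mult)
    ultimately show ?thesis using pos by (simp add: mult_right_mono)
  qed
qed

lemma dual_approx:
  assumes d: "is_dual V N \<phi>" and y: "y \<in> V"
    and P1: "\<forall>z\<in>V. \<forall>i. \<bar>z i\<bar> \<le> N z"
    and P2: "\<forall>z B. (\<forall>i. \<bar>z i\<bar> \<le> B) \<longrightarrow> N z \<le> B"
    and P3: "\<forall>z\<in>V. \<forall>a. (\<lambda>i. a * z i) \<in> V"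
    and e: "e > 0"
  shows "\<exists>x\<in>V. N x \<le> 1 \<and> dual_norm V N \<phi> - e < \<phi> x"
proof -
  have nn: "\<forall>z\<in>V. 0 \<le> N z" by (meson P1 abs_ge_zero order_trans)
  have "(\<lambda>i. 0 * y i) \<in> V" using P3 y by blast
  moreover have "N (\<lambda>i. 0 * y i) \<le> 1" using P2 by simp
  ultimately have ne: "{z\<in>V. N z \<le> 1} \<noteq> {}" by blast
  have "dual_norm V N \<phi> - e < dual_norm V N \<phi>" using e by simp
  then obtain x where x: "x \<in> V" "N x \<le> 1" "dual_norm V N \<phi> - e < \<bar>\<phi> x\<bar>"
    unfolding dual_norm_def less_cSUP_iff[OF ne dual_bdd[OF d nn]] by auto
  show ?thesis
  proof (cases "\<phi> x \<ge> 0")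
    case True then show ?thesis using x by auto
  next
    case False
    let ?x = "\<lambda>i. (-1) * x i"
    have "?x \<in> V" using P3 x by blast
    moreover have "N ?x \<le> 1"
    proof -
      have "\<forall>i. \<bar>?x i\<bar> \<le> 1"
      proof
        fix i have "\<bar>x i\<bar> \<le> N x" using P1 x(1) by blast
        then show "\<bar>?x i\<bar> \<le> 1" using x(2) by simp
      qed
      then show ?thesis by (rule mp[OF spec[OF spec[OF P2]]])
    qed
    moreover have "\<phi> ?x = - \<phi> x" using lin_scale[OF d x(1), of "-1"] by simp
    ultimately show ?thesis using x False by (intro bexI[of _ ?x]) auto
  qed
qed

lemma c_P1: "\<forall>z\<in>c_space. \<forall>i. \<bar>z i\<bar> \<le> c_norm z" by (auto simp: c_space_def c_le)
lemma c_P2: "\<forall>z B. (\<forall>i. \<bar>z i\<bar> \<le> B) \<longrightarrow> c_norm z \<le> B" by (auto intro: c_norm_le)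
lemma c_scale: "convergent (x :: nat \<Rightarrow> real) \<Longrightarrow> convergent (\<lambda>i. a * x i)"
  unfolding convergent_def by (blast intro: tendsto_mult_left)
lemma c_addc: "convergent (x :: nat \<Rightarrow> real) \<Longrightarrow> convergent y \<Longrightarrow> convergent (\<lambda>i. x i + y i)"
  by (auto simp: convergent_def intro: tendsto_add)
lemma c_P3: "\<forall>z\<in>c_space. \<forall>a. (\<lambda>i. a * z i) \<in> c_space" by (auto simp: c_space_def c_scale)
lemma c_zero: "(\<lambda>_. 0) \<in> c_space" by (simp add: c_space_def convergent_const)

lemma C01_P1: "\<forall>z\<in>C01. \<forall>i. \<bar>z i\<bar> \<le> C01_norm z" by (auto simp: C01_le)
lemma C01_P2: "\<forall>z B. (\<forall>i. \<bar>z i\<bar> \<le> B) \<longrightarrow> C01_norm z \<le> B" by (auto intro: C01_norm_le)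
lemma C01_scale: "f \<in> C01 \<Longrightarrow> (\<lambda>i. a * f i) \<in> C01"
  by (auto simp: C01_def intro: continuous_intros)
lemma C01_add: "f \<in> C01 \<Longrightarrow> g \<in> C01 \<Longrightarrow> (\<lambda>i. f i + g i) \<in> C01"
  by (auto simp: C01_def intro: continuous_intros)
lemma C01_P3: "\<forall>z\<in>C01. \<forall>a. (\<lambda>i. a * z i) \<in> C01" by (auto simp: C01_scale)
lemma C01_zero: "(\<lambda>_. 0) \<in> C01" by (simp add: C01_def)



lemma C01_dual_le: "is_dual C01 C01_norm \<psi> \<Longrightarrow> h \<in> C01 \<Longrightarrow> \<bar>\<psi> h\<bar> \<le> dual_norm C01 C01_norm \<psi> * C01_norm h"
  by (rule dual_le[OF _ _ C01_P1 C01_P2 C01_P3])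

lemma c_dual_le: "is_dual c_space c_norm \<phi> \<Longrightarrow> x \<in> c_space \<Longrightarrow> \<bar>\<phi> x\<bar> \<le> dual_norm c_space c_norm \<phi> * c_norm x"
  by (rule dual_le[OF _ _ c_P1 c_P2 c_P3])

lemma dual_nonneg: "is_dual c_space c_norm \<phi> \<Longrightarrow> 0 \<le> dual_norm c_space c_norm \<phi>"
proof -
  assume d: "is_dual c_space c_norm \<phi>"
  have nn: "\<forall>z\<in>c_space. 0 \<le> c_norm z" using c_P1 by (meson abs_ge_zero order_trans)
  have "c_norm (\<lambda>_. 0) \<le> 1" using c_norm_le[of "\<lambda>_. 0" 1] by simp
  from dual_le1[OF d c_zero this nn] show ?thesis by linarith
qed

lemma ZZ_sub: "ZZ \<subseteq> {0..1}" using pp_in by (auto simp: ZZ_def)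

lemma key0:
  assumes psi: "is_dual C01 C01_norm \<psi>" and ext: "\<forall>x\<in>c_space. \<psi> (TT x) = \<phi> x"
    and nrm: "dual_norm C01 C01_norm \<psi> = dual_norm c_space c_norm \<phi>"
    and phi: "is_dual c_space c_norm \<phi>" and g: "g \<in> C01" and gz: "\<forall>z\<in>ZZ. g z = 0"
  shows "\<psi> g \<le> 0"
proof (rule ccontr)
  assume "\<not> \<psi> g \<le> 0"
  then have beta: "\<psi> g > 0" by simp
  define M where "M = dual_norm c_space c_norm \<phi>"
  have M0: "M \<ge> 0" unfolding M_def by (rule dual_nonneg[OF phi])
  have bnd: "\<bar>\<psi> h\<bar> \<le> M * C01_norm h" if "h \<in> C01" for h
    using C01_dual_le[OF psi that] nrm by (simp add: M_def)
  define G where "G = C01_norm g"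
  have gG: "\<bar>g t\<bar> \<le> G" for t using C01_le[OF g] by (simp add: G_def)
  have gout: "g t = 0" if "t \<notin> {0..1}" for t using g that by (simp add: C01_def)
  have Gpos: "G > 0"
  proof (rule ccontr)
    assume "\<not> G > 0"
    then have "g t = 0" for t using gG[of t] by linarith
    then have "g = (\<lambda>i. 0 * g i)" by auto
    then have "\<psi> g = 0 * \<psi> g" using lin_scale[OF psi g, of 0] by metis
    then show False using beta by simp
  qed
  have main: "\<psi> g \<le> M * \<delta>" if dpos: "\<delta> > 0" for \<delta>
  proof -
    have "uniformly_continuous_on {0..1} g"
      using g by (intro compact_uniformly_continuous) (auto simp: C01_def)
    then obtain \<eta> where eta: "\<eta> > 0"
      and uc: "\<forall>t\<in>{0..1}. \<forall>z\<in>{0..1}. dist z t < \<eta> \<longrightarrow> dist (g z) (g t) < \<delta>"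
      unfolding uniformly_continuous_on_def using dpos by blast
    define v where "v t = max (-\<delta>) (min \<delta> (g t))" for t
    define u where "u t = g t + (-1) * v t" for t
    have vC: "v \<in> C01"
    proof -
      have "continuous_on {0..1} v" unfolding v_def using g
        by (intro continuous_intros) (auto simp: C01_def)
      moreover have "v t = 0" if "t \<notin> {0..1}" for t using gout[OF that] dpos by (simp add: v_def)
      ultimately show ?thesis by (simp add: C01_def)
    qed
    have uC: "u \<in> C01" unfolding u_def by (intro C01_add C01_scale g vC)
    have split: "g = (\<lambda>i. u i + v i)" by (auto simp: u_def)
    have psig: "\<psi> g = \<psi> u + \<psi> v" by (subst split) (rule lin_add[OF psi uC vC])
    have "C01_norm v \<le> \<delta>" by (rule C01_norm_le) (use dpos in \<open>auto simp: v_def max_def min_def\<close>)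
    then have psiv: "\<bar>\<psi> v\<bar> \<le> M * \<delta>" using bnd[OF vC] M0 by (meson mult_left_mono order_trans)
    have uG: "\<bar>u t\<bar> \<le> G" for t
    proof -
      have "\<bar>u t\<bar> \<le> \<bar>g t\<bar>" using dpos by (auto simp: u_def v_def max_def min_def)
      then show ?thesis using gG[of t] by linarith
    qed
    have far: "t \<in> {0..1} \<and> \<eta> \<le> dd t" if "u t \<noteq> 0" for t
    proof -
      have gt: "\<bar>g t\<bar> > \<delta>" using that dpos by (auto simp: u_def v_def max_def min_def split: if_splits)
      then have t01: "t \<in> {0..1}" using gout dpos by force
      have "\<eta> \<le> dist t z" if "z \<in> ZZ" for z
      proof (rule ccontr)
        assume "\<not> \<eta> \<le> dist t z"
        then have "dist t z < \<eta>" by simp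
        then have "dist (g t) (g z) < \<delta>" using uc t01 ZZ_sub that by blast
        then show False using gz that gt by (simp add: dist_real_def)
      qed
      then have "\<eta> \<le> (INF z\<in>ZZ. dist t z)"
        by (intro cINF_greatest) (auto simp: ZZ_def)
      moreover have "ZZ \<noteq> {}" by (simp add: ZZ_def)
      ultimately have "\<eta> \<le> dd t" unfolding dd_def by (simp add: infdist_notempty)
      then show ?thesis using t01 by simp
    qed
    define \<kappa> where "\<kappa> = \<eta> / G"
    have kpos: "\<kappa> > 0" using eta Gpos by (simp add: \<kappa>_def)
    have less: "\<kappa> * (\<psi> g - M * \<delta>) < e" if e: "e > 0" for e
    proof -
      obtain x where x: "x \<in> c_space" "c_norm x \<le> 1" "M - e < \<phi> x"
        using dual_approx[OF phi c_zero c_P1 c_P2 c_P3 e] by (auto simp: M_def)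
      have cx: "convergent x" using x(1) by (simp add: c_space_def)
      define h where "h t = TT x t + \<kappa> * u t" for t
      have hC: "h \<in> C01" unfolding h_def by (intro C01_add C01_scale TT_C01 cx uC)
      have "\<bar>h t\<bar> \<le> 1" for t
      proof (cases "u t = 0")
        case True then show ?thesis using TT_bound[OF cx, of t] x(2) by (simp add: h_def)
      next
        case False
        then have f: "t \<in> {0..1}" "\<eta> \<le> dd t" using far by auto
        have d1: "dd t \<le> 1" using dd_le[of t] f(1) by auto
        have "\<bar>TT x t\<bar> \<le> (1 - dd t) * c_norm x" by (rule TT_bound1[OF cx f(1)])
        also have "\<dots> \<le> (1 - dd t) * 1" using d1 x(2) by (intro mult_left_mono) auto
        finally have a: "\<bar>TT x t\<bar> \<le> 1 - \<eta>" using f(2) by simp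
        have "\<bar>\<kappa> * u t\<bar> \<le> \<kappa> * G" using uG[of t] kpos by (simp add: abs_mult)
        also have "\<dots> = \<eta>" using Gpos by (simp add: \<kappa>_def)
        finally have b: "\<bar>\<kappa> * u t\<bar> \<le> \<eta>" .
        show ?thesis using a b by (simp add: h_def)
      qed
      then have "C01_norm h \<le> 1" by (intro C01_norm_le)
      then have "\<psi> h \<le> M" using bnd[OF hC] M0 mult_left_mono[of "C01_norm h" 1 M] by linarith
      moreover have "\<psi> h = \<phi> x + \<kappa> * \<psi> u"
      proof -
        have "\<psi> h = \<psi> (TT x) + \<psi> (\<lambda>i. \<kappa> * u i)" unfolding h_def
          by (rule lin_add[OF psi TT_C01[OF cx] C01_scale[OF uC]])
        also have "\<dots> = \<phi> x + \<kappa> * \<psi> u" using ext x(1) lin_scale[OF psi uC] by simp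
        finally show ?thesis .
      qed
      moreover have "\<psi> u \<ge> \<psi> g - M * \<delta>" using psig psiv by linarith
      moreover have "\<kappa> * (\<psi> g - M * \<delta>) \<le> \<kappa> * \<psi> u"
        using kpos \<open>\<psi> u \<ge> \<psi> g - M * \<delta>\<close> by (intro mult_left_mono) auto
      ultimately have "\<phi> x + \<kappa> * (\<psi> g - M * \<delta>) \<le> M" by linarith
      then show ?thesis using x(3) by linarith
    qed
    have "\<kappa> * (\<psi> g - M * \<delta>) \<le> 0"
    proof (rule ccontr)
      assume "\<not> ?thesis"
      then show False using less[of "\<kappa> * (\<psi> g - M * \<delta>)"] by linarith
    qed
    then have "\<psi> g - M * \<delta> \<le> 0" using kpos by (simp add: mult_le_0_iff)
    then show ?thesis by simp
  qed
  define \<delta> where "\<delta> = \<psi> g / (2 * (M + 1))"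
  have "\<delta> > 0" using beta M0 by (simp add: \<delta>_def)
  then have "\<psi> g \<le> M * \<delta>" by (rule main)
  moreover have "M * \<delta> < \<psi> g"
  proof -
    have "M * \<delta> = \<psi> g * (M / (2 * (M + 1)))" by (simp add: \<delta>_def)
    moreover have "M / (2 * (M + 1)) < 1" using M0 by (simp add: divide_simps)
    ultimately show ?thesis using beta mult_strict_left_mono[of "M / (2 * (M + 1))" 1 "\<psi> g"] by simp
  qed
  ultimately show False by linarith
qed

lemma key:
  assumes psi: "is_dual C01 C01_norm \<psi>" and ext: "\<forall>x\<in>c_space. \<psi> (TT x) = \<phi> x"
    and nrm: "dual_norm C01 C01_norm \<psi> = dual_norm c_space c_norm \<phi>"
    and phi: "is_dual c_space c_norm \<phi>" and g: "g \<in> C01" and gz: "\<forall>z\<in>ZZ. g z = 0"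
  shows "\<psi> g = 0"
proof -
  have "\<psi> g \<le> 0" by (rule key0[OF assms])
  moreover have "\<psi> (\<lambda>i. (-1) * g i) \<le> 0"
    by (rule key0[OF psi ext nrm phi C01_scale[OF g]]) (use gz in simp)
  moreover have "\<psi> (\<lambda>i. (-1) * g i) = - \<psi> g" using lin_scale[OF psi g, of "-1"] by simp
  ultimately show ?thesis by linarith
qed

lemma uniq:
  assumes psi: "is_dual C01 C01_norm \<psi>" and ext: "\<forall>x\<in>c_space. \<psi> (TT x) = \<phi> x"
    and nrm: "dual_norm C01 C01_norm \<psi> = dual_norm c_space c_norm \<phi>"
    and phi: "is_dual c_space c_norm \<phi>" and f: "f \<in> C01"
  shows "\<psi> f = \<phi> (RR f)"
proof -
  define x where "x = RR f"
  have cx: "convergent x" using RR_c[OF f] by (simp add: x_def)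
  define g where "g t = f t + (-1) * TT x t" for t
  have gC: "g \<in> C01" unfolding g_def by (intro C01_add C01_scale f TT_C01 cx)
  have gz: "\<forall>z\<in>ZZ. g z = 0"
    using RR_lim[OF f] by (auto simp: ZZ_def g_def TT_pp TT_0 x_def RR_def)
  have "f = (\<lambda>i. TT x i + g i)" by (auto simp: g_def)
  then have "\<psi> f = \<psi> (TT x) + \<psi> g" using lin_add[OF psi TT_C01[OF cx] gC] by metis
  also have "\<dots> = \<phi> x" using key[OF psi ext nrm phi gC gz] ext cx by (simp add: c_space_def)
  finally show ?thesis by (simp add: x_def)
qed



theorem corollary6p17:
  shows "U_embeddable c_space c_norm C01 C01_norm"
  unfolding U_embeddable_def U_embedding_def
proof (rule exI[of _ TT], intro conjI allI impI ballI)
  show "TT x \<in> C01" if "x \<in> c_space" for x using that TT_C01 by (simp add: c_space_def)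
  show "lin_on c_space TT (\<lambda>f g i. f i + g i) (\<lambda>a f i. a * f i)"
    unfolding lin_on_def by (auto simp: c_space_def TT_add TT_scale)
  show "C01_norm (TT x) = c_norm x" if "x \<in> c_space" for x using that TT_norm by (simp add: c_space_def)
next
  fix \<phi> :: "(nat \<Rightarrow> real) \<Rightarrow> real"
  assume phi: "is_dual c_space c_norm \<phi>"
  define M where "M = dual_norm c_space c_norm \<phi>"
  have M0: "M \<ge> 0" unfolding M_def by (rule dual_nonneg[OF phi])
  define \<psi> where "\<psi> f = \<phi> (RR f)" for f :: "real \<Rightarrow> real"
  have RRc: "RR f \<in> c_space" if "f \<in> C01" for f using RR_c[OF that] by (simp add: c_space_def)
  have bd: "\<bar>\<psi> f\<bar> \<le> M * C01_norm f" if f: "f \<in> C01" for f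
  proof -
    have "\<bar>\<psi> f\<bar> \<le> M * c_norm (RR f)" unfolding \<psi>_def M_def by (rule c_dual_le[OF phi RRc[OF f]])
    also have "\<dots> \<le> M * C01_norm f" using RR_norm[OF f] M0 by (rule mult_left_mono)
    finally show ?thesis .
  qed
  have psi: "is_dual C01 C01_norm \<psi>"
    unfolding is_dual_def lin_on_def
  proof (intro conjI ballI allI exI)
    show "\<psi> (\<lambda>i. f i + g i) = \<psi> f + \<psi> g" if "f \<in> C01" "g \<in> C01" for f g
      using lin_add[OF phi RRc[OF that(1)] RRc[OF that(2)]] by (simp add: \<psi>_def RR_def[abs_def])
    show "\<psi> (\<lambda>i. a * f i) = a * \<psi> f" if "f \<in> C01" for a f
      using lin_scale[OF phi RRc[OF that]] by (simp add: \<psi>_def RR_def[abs_def])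
    show "\<bar>\<psi> f\<bar> \<le> M * C01_norm f" if "f \<in> C01" for f by (rule bd[OF that])
  qed
  have ext: "\<forall>x\<in>c_space. \<psi> (TT x) = \<phi> x" by (simp add: \<psi>_def RR_TT)
  have nrm: "dual_norm C01 C01_norm \<psi> = dual_norm c_space c_norm \<phi>"
  proof (rule antisym)
    have ne1: "{y \<in> C01. C01_norm y \<le> 1} \<noteq> {}"
      using C01_zero C01_norm_le[of "\<lambda>_. 0" 1] by auto
    show "dual_norm C01 C01_norm \<psi> \<le> dual_norm c_space c_norm \<phi>"
      unfolding dual_norm_def[of C01]
    proof (rule cSUP_least[OF ne1])
      fix y assume "y \<in> {y \<in> C01. C01_norm y \<le> 1}"
      then have y: "y \<in> C01" "C01_norm y \<le> 1" by auto
      have "\<bar>\<psi> y\<bar> \<le> M * C01_norm y" by (rule bd[OF y(1)])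
      also have "\<dots> \<le> M * 1" using y(2) M0 by (rule mult_left_mono)
      finally show "\<bar>\<psi> y\<bar> \<le> dual_norm c_space c_norm \<phi>" by (simp add: M_def)
    qed
    have ne2: "{x \<in> c_space. c_norm x \<le> 1} \<noteq> {}"
      using c_zero c_norm_le[of "\<lambda>_. 0" 1] by auto
    have nn: "\<forall>z\<in>C01. 0 \<le> C01_norm z" using C01_P1 by (meson abs_ge_zero order_trans)
    show "dual_norm c_space c_norm \<phi> \<le> dual_norm C01 C01_norm \<psi>"
      unfolding dual_norm_def[of c_space]
    proof (rule cSUP_least[OF ne2])
      fix x assume "x \<in> {x \<in> c_space. c_norm x \<le> 1}"
      then have x: "x \<in> c_space" "c_norm x \<le> 1" by auto
      have cx: "convergent x" using x(1) by (simp add: c_space_def)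
      have "\<bar>\<psi> (TT x)\<bar> \<le> dual_norm C01 C01_norm \<psi>"
        by (rule dual_le1[OF psi TT_C01[OF cx] _ nn]) (use x(2) TT_norm[OF cx] in simp)
      then show "\<bar>\<phi> x\<bar> \<le> dual_norm C01 C01_norm \<psi>" using ext x(1) by simp
    qed
  qed
  show "\<exists>\<psi>. (is_dual C01 C01_norm \<psi> \<and> (\<forall>x\<in>c_space. \<psi> (TT x) = \<phi> x) \<and>
            dual_norm C01 C01_norm \<psi> = dual_norm c_space c_norm \<phi>) \<and>
           (\<forall>\<psi>'. is_dual C01 C01_norm \<psi>' \<and> (\<forall>x\<in>c_space. \<psi>' (TT x) = \<phi> x) \<and>
                  dual_norm C01 C01_norm \<psi>' = dual_norm c_space c_norm \<phi> \<longrightarrow>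
                  (\<forall>y\<in>C01. \<psi>' y = \<psi> y))"
  proof (rule exI[of _ \<psi>], intro conjI allI impI ballI)
    show "is_dual C01 C01_norm \<psi>" by (rule psi)
    show "\<psi> (TT x) = \<phi> x" if "x \<in> c_space" for x using ext that by blast
    show "dual_norm C01 C01_norm \<psi> = dual_norm c_space c_norm \<phi>" by (rule nrm)
  next
    fix \<psi>' y
    assume H: "is_dual C01 C01_norm \<psi>' \<and> (\<forall>x\<in>c_space. \<psi>' (TT x) = \<phi> x) \<and>
                  dual_norm C01 C01_norm \<psi>' = dual_norm c_space c_norm \<phi>"
      and y: "y \<in> C01"
    have "\<psi>' y = \<phi> (RR y)" using uniq[OF _ _ _ phi y] H by blast
    then show "\<psi>' y = \<psi> y" by (simp add: \<psi>_def)
  qed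
qed

end
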